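(* Consider the information processing system below operated under an arbitrary inspection policy. Fix a job index $i\in\mathbb{N}$ and $x>0$. Let $S^F_i(h,l)$ and $\widehat H^F_i$ denote the values of $S_{i,t}(h,l)$ and $\widehat H_{i,t}$ at the time job $i$ departs from the system, and let $$\mathcal{G}_x=\{\exists h'\in\mathcal{H}\text{ such that } S^F_i(h',l)\ge x\ \ \forall l\in\mathcal{H},\,l\neq h'\}.$$ Then for all $h\in\mathcal{H}$, $$\mathbb{P}(\widehat H^F_i\neq h,\ \mathcal{G}_x\mid H_i=h)\le c_\mathcal{H}\exp(-x).$$
   Context: Model: jobs arrive by a rate-1 Poisson process; job $i$ has a hidden label $H_i$ in a finite set $\mathcal{H}$ with $|\mathcal{H}|=c_\mathcal{H}$, i.i.d. with a prior $\pi$ having positive entries. There are finitely many experts, each with a type $k$ in a finite set $\mathcal{K}$; a type-$k$ expert's inspection lasts an independent exponential time of mean $1/\mu_k$ and its outcome, if it is the $j$-th inspection of job $i$, is $X_{i,j}\in\mathcal{X}$ ($\mathcal{X}$ finite) with law $p(H_i,k,\cdot)$, independent of everything else. An inspection policy may, using all past history, assign idle experts to jobs and let jobs depart with a classification. Let $N_{i,t}$ be the number of inspections job $i$ has received (completed) by time $t$, $K_{i,j}$ the type of the expert performing its $j$-th inspection, and $$S_{i,t}(h,l)=\sum_{j=1}^{N_{i,t}}\ln\frac{p(h,K_{i,j},X_{i,j})}{p(l,K_{i,j},X_{i,j})},\qquad h,l\in\mathcal{H}.$$ $\widehat H_{i,t}$ is the maximum-likelihood estimator $\widehat H_{i,t}\in\arg\max_{h\in\mathcal{H}}\prod_{j=1}^{N_{i,t}}p(h,K_{i,j},X_{i,j})$,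 ties broken arbitrarily. *)

theory Defs
  imports "HOL-Probability.Probability"
begin

text \<open>Log-likelihood ratio statistic S(h,l) of a job after its observations at
  global event steps 1..N; obs n = Some (k, y) means that at step n the job
  completed an inspection by a type-k expert with outcome y, None that no
  inspection of the job completed at step n.\<close>
definition llr_stat :: "('h \<Rightarrow> 'k \<Rightarrow> 'x \<Rightarrow> real) \<Rightarrow> (nat \<Rightarrow> ('k \<times> 'x) option) \<Rightarrow> nat \<Rightarrow> 'h \<Rightarrow> 'h \<Rightarrow> real" where
  "llr_stat p obs N h l =
     (\<Sum>n\<in>{1..N}. (case obs n of None \<Rightarrow> 0 | Some (k, y) \<Rightarrow> ln (p h k y / p l k y)))"

definition likelihood :: "('h \<Rightarrow> 'k \<Rightarrow> 'x \<Rightarrow> real) \<Rightarrow> (nat \<Rightarrow> ('k \<times> 'x) option) \<Rightarrow> nat \<Rightarrow> 'h \<Rightarrow> real" where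
  "likelihood p obs N h =
     (\<Prod>n\<in>{1..N}. (case obs n of None \<Rightarrow> 1 | Some (k, y) \<Rightarrow> p h k y))"

end

theory Submission
  imports Defs
begin

lemma finrange_law:
  assumes M: "prob_space M"
    and g: "g \<in> borel_measurable N" and sub: "subalgebra M N"
    and fin: "finite (g ` space M)"
    and S: "S \<in> sets M" and B: "B \<in> sets M"
    and phim: "phi \<in> borel_measurable M" and phib: "\<And>w. w\<in>space M \<Longrightarrow> \<bar>phi w\<bar> \<le> C"
    and law: "\<And>A. A \<in> sets N \<Longrightarrow> measure M (A \<inter> S) = (\<integral>w. indicator A w * indicator B w * phi w \<partial>M)"
  shows "(\<integral>w. g w * indicator S w \<partial>M) = (\<integral>w. g w * indicator B w * phi w \<partial>M)"
proof -
  interpret prob_space M by (rule M)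
  have spN: "space N = space M" and setsN: "sets N \<subseteq> sets M" using sub by (auto simp: subalgebra_def)
  define V where "V = g ` space M"
  define Av where "Av v = {w\<in>space M. g w = v}" for v
  have AvN: "Av v \<in> sets N" for v
  proof -
    have "g -` {v} \<inter> space N \<in> sets N" using g by (rule measurable_sets) simp
    moreover have "g -` {v} \<inter> space N = Av v" using spN by (auto simp: Av_def)
    ultimately show ?thesis by simp
  qed
  have AvM: "Av v \<in> sets M" for v using AvN setsN by auto
  have gsum: "g w = (\<Sum>v\<in>V. v * indicator (Av v) w)" if "w \<in> space M" for w
  proof -
    have "(\<Sum>v\<in>V. v * indicator (Av v) w) = (\<Sum>v\<in>V. if v = g w then v else 0)"
      by (rule sum.cong) (auto simp: Av_def that)
    also have "\<dots> = g w" using fin that by (simp add: V_def)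
    finally show ?thesis by simp
  qed
  have int1: "integrable M (\<lambda>w. indicator A w * indicator S w :: real)" if "A \<in> sets M" for A
    using that S by (intro integrable_const_bound[where B=1]) (auto simp: indicator_def)
  obtain w0 where "w0 \<in> space M" using not_empty by blast
  then have C0: "0 \<le> C" using phib[of w0] by linarith
  have int2: "integrable M (\<lambda>w. indicator A w * indicator B w * phi w)" if "A \<in> sets M" for A
    using that B phim phib C0 by (intro integrable_const_bound[where B=C])
      (auto simp: indicator_def intro!: AE_I2)
  have "(\<integral>w. g w * indicator S w \<partial>M) = (\<integral>w. (\<Sum>v\<in>V. v * (indicator (Av v) w * indicator S w)) \<partial>M)"
    by (intro Bochner_Integration.integral_cong refl) (auto simp: gsum sum_distrib_right mult.assoc)
  also have "\<dots> = (\<Sum>v\<in>V. v * (\<integral>w. indicator (Av v) w * indicator S w \<partial>M))"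
    using int1[OF AvM] by (simp add: integral_sum)
  also have "\<dots> = (\<Sum>v\<in>V. v * measure M (Av v \<inter> S))"
  proof (rule sum.cong[OF refl])
    fix v
    have "(\<integral>w. indicator (Av v) w * indicator S w \<partial>M) = (\<integral>w. indicator (Av v \<inter> S) w \<partial>M :: real)"
      by (intro Bochner_Integration.integral_cong refl) (simp add: indicator_def)
    also have "\<dots> = measure M (Av v \<inter> S)" using AvM S by (simp add: Int_absorb2 sets.sets_into_space le_infI1)
    finally show "v * (\<integral>w. indicator (Av v) w * indicator S w \<partial>M) = v * measure M (Av v \<inter> S)" by simp
  qed
  also have "\<dots> = (\<Sum>v\<in>V. v * (\<integral>w. indicator (Av v) w * indicator B w * phi w \<partial>M))"
    using law[OF AvN] by simp
  also have "\<dots> = (\<integral>w. (\<Sum>v\<in>V. v * (indicator (Av v) w * indicator B w * phi w)) \<partial>M)"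
    using int2[OF AvM] by (simp add: integral_sum)
  also have "\<dots> = (\<integral>w. g w * indicator B w * phi w \<partial>M)"
    by (intro Bochner_Integration.integral_cong refl) (auto simp: gsum sum_distrib_right mult.assoc)
  finally show ?thesis .
qed

lemma lik_pos:
  assumes "\<And>g k y. p g k y > (0::real)"
  shows "likelihood p obs N g > 0"
  unfolding likelihood_def using assms by (intro prod_pos) (auto split: option.split)

lemma llr_lik:
  assumes pp: "\<And>g k y. p g k y > (0::real)"
  shows "llr_stat p obs N a b = ln (likelihood p obs N a) - ln (likelihood p obs N b)"
proof -
  have "ln (likelihood p obs N a) = (\<Sum>n\<in>{1..N}. ln (case obs n of None \<Rightarrow> 1 | Some (k, y) \<Rightarrow> p a k y))"
    unfolding likelihood_def using pp
    by (intro ln_prod) (auto split: option.split simp: less_imp_neq[symmetric])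
  moreover have "ln (likelihood p obs N b) = (\<Sum>n\<in>{1..N}. ln (case obs n of None \<Rightarrow> 1 | Some (k, y) \<Rightarrow> p b k y))"
    unfolding likelihood_def using pp
    by (intro ln_prod) (auto split: option.split simp: less_imp_neq[symmetric])
  ultimately show ?thesis
    unfolding llr_stat_def using pp
    by (simp add: sum_subtractf[symmetric]) (intro sum.cong refl, auto simp: ln_divide_pos split: option.split)
qed

lemma fin_bound:
  fixes f :: "'a \<Rightarrow> real"
  assumes "finite (f ` S)"
  obtains B where "\<And>w. w \<in> S \<Longrightarrow> \<bar>f w\<bar> \<le> B"
proof
  fix w assume "w \<in> S"
  then show "\<bar>f w\<bar> \<le> Max (abs ` f ` S)" using assms by (intro Max_ge) auto
qed

theorem lemma1:
  fixes M :: "'a measure"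
    and F :: "nat \<Rightarrow> 'a measure"
    and H :: "'a \<Rightarrow> 'h::finite"
    and Obs :: "nat \<Rightarrow> 'a \<Rightarrow> ('k::finite \<times> 'x::finite) option"
    and T :: "'a \<Rightarrow> enat"
    and Hhat :: "'a \<Rightarrow> 'h"
    and p :: "'h \<Rightarrow> 'k \<Rightarrow> 'x \<Rightarrow> real"
    and prior :: "'h \<Rightarrow> real"
    and x :: real and h :: 'h
  assumes M: "prob_space M"
    and F_sub: "\<And>n. subalgebra M (F n)"
    and F_mono: "\<And>n. sets (F n) \<subseteq> sets (F (Suc n))"
    and p_pos: "\<And>g k y. p g k y > 0"
    and p_sum: "\<And>g k. (\<Sum>y\<in>UNIV. p g k y) = 1"
    and H_meas: "H \<in> measurable (F 0) (count_space UNIV)"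
    and prior_def: "\<And>g. measure M {\<omega>\<in>space M. H \<omega> = g} = prior g"
    and prior_pos: "\<And>g. prior g > 0"
    and Obs_meas: "\<And>n. Obs n \<in> measurable (F n) (count_space UNIV)"
    and Obs_law: "\<And>n A k y. A \<in> sets (F n) \<Longrightarrow>
        measure M (A \<inter> {\<omega>\<in>space M. Obs (Suc n) \<omega> = Some (k, y)}) =
        (\<integral>\<omega>. indicator A \<omega> * indicator {\<omega>\<in>space M. \<exists>z. Obs (Suc n) \<omega> = Some (k, z)} \<omega>
               * p (H \<omega>) k y \<partial>M)"
    and T_stop: "\<And>n. {\<omega>\<in>space M. T \<omega> \<le> enat n} \<in> sets (F n)"
    and T_gone: "\<And>\<omega> n. \<omega> \<in> space M \<Longrightarrow> T \<omega> \<le> enat n \<Longrightarrow> Obs (Suc n) \<omega> = None"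
    and Hhat_meas: "Hhat \<in> measurable M (count_space UNIV)"
    and Hhat_ML: "\<And>\<omega> g. \<omega> \<in> space M \<Longrightarrow> T \<omega> \<noteq> \<infinity> \<Longrightarrow>
        likelihood p (\<lambda>n. Obs n \<omega>) (the_enat (T \<omega>)) g
          \<le> likelihood p (\<lambda>n. Obs n \<omega>) (the_enat (T \<omega>)) (Hhat \<omega>)"
    and x_pos: "x > 0"
  shows "measure M {\<omega>\<in>space M. T \<omega> \<noteq> \<infinity> \<and> Hhat \<omega> \<noteq> h \<and>
            (\<exists>h'. \<forall>l. l \<noteq> h' \<longrightarrow> llr_stat p (\<lambda>n. Obs n \<omega>) (the_enat (T \<omega>)) h' l \<ge> x)
            \<and> H \<omega> = h} / measure M {\<omega>\<in>space M. H \<omega> = h}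
         \<le> real CARD('h) * exp (- x)"
proof -
  interpret prob_space M by (rule M)
  have spF: "space (F n) = space M" for n using F_sub[of n] by (auto simp: subalgebra_def)
  have setsF: "sets (F n) \<subseteq> sets M" for n using F_sub[of n] by (auto simp: subalgebra_def)
  have Fmono: "sets (F m) \<subseteq> sets (F n)" if "m \<le> n" for m n
    using lift_Suc_mono_le[of "\<lambda>n. sets (F n)", OF F_mono that] .
  have measF: "f \<in> measurable (F n) X" if "m \<le> n" "f \<in> measurable (F m) X" for f m n and X :: "'z measure"
    using measurable_mono[of X X "F m" "F n"] Fmono[OF that(1)] spF that(2) by auto
  have measM: "f \<in> measurable M X" if "f \<in> measurable (F m) X" for f m and X :: "'z measure"
    using measurable_mono[of X X "F m" M] setsF spF that by auto
  have ObsF: "Obs m \<in> measurable (F n) (count_space UNIV)" if "m \<le> n" for m n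
    using measF[OF that Obs_meas] .
  have HF: "H \<in> measurable (F n) (count_space UNIV)" for n using measF[OF _ H_meas] by simp
  have HM: "H \<in> measurable M (count_space UNIV)" using measM[OF H_meas] .
  have ObsM: "Obs m \<in> measurable M (count_space UNIV)" for m using measM[OF Obs_meas] .
  have setM: "{w\<in>space M. P (f w)} \<in> sets M" if "f \<in> measurable M (count_space UNIV)" for f :: "'a \<Rightarrow> 'zz" and P
  proof -
    have "f -` {z. P z} \<inter> space M \<in> sets M" using measurable_sets[OF that, of "{z. P z}"] by simp
    moreover have "f -` {z. P z} \<inter> space M = {w\<in>space M. P (f w)}" by auto
    ultimately show ?thesis by simp
  qed
  have p_le1: "p g k y \<le> 1" for g k y
  proof -
    have "p g k y \<le> (\<Sum>y\<in>UNIV. p g k y)" using p_pos by (intro member_le_sum) (auto intro: less_imp_le)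
    then show ?thesis using p_sum by simp
  qed
  define tmf where "tmf hh ob = case_option 0 (\<lambda>(k,y). ln (p hh k y / p h k y)) ob" for hh ob
  define L where "L h' n w = llr_stat p (\<lambda>m. Obs m w) n h' h" for h' n w
  have L_eq: "L h' n w = (\<Sum>m\<in>{1..n}. tmf h' (Obs m w))" for h' n w
    by (simp add: L_def llr_stat_def tmf_def)
  have L_Suc: "L h' (Suc n) w = L h' n w + tmf h' (Obs (Suc n) w)" for h' n w
    by (simp add: L_eq)
  have L_meas: "(\<lambda>w. L h' n w) \<in> borel_measurable (F n)" for h' n
    unfolding L_eq by (intro borel_measurable_sum measurable_compose[OF ObsF]) auto
  define G where "G h' n w = indicator {w\<in>space M. H w = h} w * exp (L h' n w)" for h' n w
  have G_meas: "G h' n \<in> borel_measurable (F n)" for h' n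
  proof -
    have "{w\<in>space M. H w = h} = H -` {h} \<inter> space (F n)" using spF by auto
    then have "{w\<in>space M. H w = h} \<in> sets (F n)" using measurable_sets[OF HF, of "{h}" n] by simp
    then show ?thesis unfolding G_def using L_meas by (intro borel_measurable_times) auto
  qed
  have fin_exp: "finite ((\<lambda>w. exp (L h' n w)) ` space M)" for h' n
  proof (induction n)
    case 0 then show ?case by (auto simp: L_eq intro: finite_subset[of _ "{1}"])
  next
    case (Suc n)
    have "(\<lambda>w. exp (L h' (Suc n) w)) ` space M \<subseteq> (\<lambda>(a,b). a*b) ` (((\<lambda>w. exp (L h' n w)) ` space M) \<times> range (\<lambda>ob. exp (tmf h' ob)))"
      by (auto simp: L_Suc exp_add)
    then show ?case by (rule finite_subset) (use Suc in auto)
  qed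
  have fin_G: "finite (G h' n ` space M)" for h' n
  proof -
    have "G h' n ` space M \<subseteq> (\<lambda>(a,b). a*b) ` ({0,1} \<times> ((\<lambda>w. exp (L h' n w)) ` space M))"
      by (auto simp: G_def indicator_def)
    then show ?thesis by (rule finite_subset) (use fin_exp in auto)
  qed
  have G_nonneg: "G h' n w \<ge> 0" for h' n w by (simp add: G_def)
  have mart: "(\<integral>w. G h' n w \<partial>M) = prior h" for h' n
  proof (induction n)
    case 0
    have "(\<integral>w. G h' 0 w \<partial>M) = (\<integral>w. indicator {w\<in>space M. H w = h} w \<partial>M)"
      by (intro Bochner_Integration.integral_cong refl) (simp add: G_def L_eq)
    also have "\<dots> = measure M {w\<in>space M. H w = h}" by (simp add: Int_def conj_commute) (metis (lifting))
    finally show ?case using prior_def by simp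
  next
    case (Suc n)
    define SN where "SN = {w\<in>space M. Obs (Suc n) w = None}"
    define Sy where "Sy k y = {w\<in>space M. Obs (Suc n) w = Some (k, y)}" for k y
    define Ty where "Ty k = {w\<in>space M. \<exists>z. Obs (Suc n) w = Some (k, z)}" for k
    have SNm: "SN \<in> sets M" unfolding SN_def by (rule setM[OF ObsM])
    have Sym: "Sy k y \<in> sets M" for k y unfolding Sy_def by (rule setM[OF ObsM])
    have Tym: "Ty k \<in> sets M" for k unfolding Ty_def by (rule setM[OF ObsM])
    obtain B where B: "\<And>w. w\<in>space M \<Longrightarrow> \<bar>G h' n w\<bar> \<le> B" using fin_bound[OF fin_G] by blast
    obtain w0 where "w0 \<in> space M" using not_empty by blast
    then have B0: "0 \<le> B" using B[of w0] by linarith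
    have GM: "G h' n \<in> borel_measurable M" using measM[OF G_meas] .
    have intg: "integrable M (\<lambda>w. G h' n w * indicator A w)" if "A \<in> sets M" for A
      using that B B0 GM by (intro integrable_const_bound[where B=B])
        (auto simp: indicator_def abs_mult intro!: AE_I2)
    have pt: "G h' (Suc n) w = G h' n w * indicator SN w +
       (\<Sum>k\<in>UNIV. \<Sum>y\<in>UNIV. (p h' k y / p h k y) * (G h' n w * indicator (Sy k y) w))"
      if w: "w \<in> space M" for w
    proof (cases "Obs (Suc n) w")
      case None
      then show ?thesis using w by (simp add: G_def L_Suc tmf_def SN_def Sy_def indicator_def)
    next
      case (Some q)
      obtain k0 y0 where q: "q = (k0, y0)" by (cases q)
      have ind: "indicator (Sy k y) w = (if k = k0 then (if y = y0 then 1 else 0) else (0::real))" for k y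
        using w Some q by (auto simp: Sy_def indicator_def)
      have "(\<Sum>k\<in>UNIV. \<Sum>y\<in>UNIV. (p h' k y / p h k y) * (G h' n w * indicator (Sy k y) w))
           = (\<Sum>k\<in>UNIV. \<Sum>y\<in>UNIV. if y = y0 then (if k = k0 then (p h' k0 y0 / p h k0 y0) * G h' n w else 0) else 0)"
        by (intro sum.cong refl) (simp add: ind)
      also have "\<dots> = (p h' k0 y0 / p h k0 y0) * G h' n w" by simp
      finally have "(\<Sum>k\<in>UNIV. \<Sum>y\<in>UNIV. (p h' k y / p h k y) * (G h' n w * indicator (Sy k y) w))
           = (p h' k0 y0 / p h k0 y0) * G h' n w" .
      moreover have "G h' (Suc n) w = G h' n w * (p h' k0 y0 / p h k0 y0)"
        using Some q p_pos by (simp add: G_def L_Suc tmf_def exp_add)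
      moreover have "indicator SN w = (0::real)" using Some by (simp add: SN_def indicator_def)
      ultimately show ?thesis by simp
    qed
    have key: "(\<integral>w. G h' n w * indicator (Sy k y) w \<partial>M) = p h k y * (\<integral>w. G h' n w * indicator (Ty k) w \<partial>M)" for k y
    proof -
      have "(\<integral>w. G h' n w * indicator (Sy k y) w \<partial>M) = (\<integral>w. G h' n w * indicator (Ty k) w * p (H w) k y \<partial>M)"
      proof (rule finrange_law[OF M G_meas F_sub fin_G Sym Tym])
        show "(\<lambda>w. p (H w) k y) \<in> borel_measurable M" by (intro measurable_compose[OF HM]) auto
        show "\<bar>p (H w) k y\<bar> \<le> 1" for w using p_le1 p_pos[of "H w" k y] by simp
        show "measure M (A \<inter> Sy k y) = (\<integral>w. indicator A w * indicator (Ty k) w * p (H w) k y \<partial>M)"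
          if "A \<in> sets (F n)" for A
          unfolding Sy_def Ty_def by (rule Obs_law[OF that])
      qed
      also have "\<dots> = (\<integral>w. p h k y * (G h' n w * indicator (Ty k) w) \<partial>M)"
        by (intro Bochner_Integration.integral_cong refl) (auto simp: G_def indicator_def)
      also have "\<dots> = p h k y * (\<integral>w. G h' n w * indicator (Ty k) w \<partial>M)" by simp
      finally show ?thesis .
    qed
    have pt2: "G h' n w = G h' n w * indicator SN w + (\<Sum>k\<in>UNIV. G h' n w * indicator (Ty k) w)"
      if w: "w \<in> space M" for w
    proof (cases "Obs (Suc n) w")
      case None
      then show ?thesis using w by (simp add: SN_def Ty_def indicator_def)
    next
      case (Some q)
      obtain k0 y0 where q: "q = (k0, y0)" by (cases q)
      have ind: "indicator (Ty k) w = (if k = k0 then 1 else (0::real))" for k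
        using w Some q by (auto simp: Ty_def indicator_def)
      have "indicator SN w = (0::real)" using Some by (simp add: SN_def indicator_def)
      then show ?thesis by (simp add: ind if_distrib cong: if_cong)
    qed
    have "(\<integral>w. G h' (Suc n) w \<partial>M) = (\<integral>w. G h' n w * indicator SN w +
       (\<Sum>k\<in>UNIV. \<Sum>y\<in>UNIV. (p h' k y / p h k y) * (G h' n w * indicator (Sy k y) w)) \<partial>M)"
      by (intro Bochner_Integration.integral_cong refl pt)
    also have "\<dots> = (\<integral>w. G h' n w * indicator SN w \<partial>M) +
       (\<Sum>k\<in>UNIV. \<Sum>y\<in>UNIV. (p h' k y / p h k y) * (\<integral>w. G h' n w * indicator (Sy k y) w \<partial>M))"
      using intg[OF SNm] intg[OF Sym] by (simp add: integral_sum)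
    also have "\<dots> = (\<integral>w. G h' n w * indicator SN w \<partial>M) +
       (\<Sum>k\<in>UNIV. (\<Sum>y\<in>UNIV. p h' k y) * (\<integral>w. G h' n w * indicator (Ty k) w \<partial>M))"
      using p_pos by (simp add: key sum_distrib_right less_imp_neq[symmetric])
    also have "\<dots> = (\<integral>w. G h' n w * indicator SN w \<partial>M) +
       (\<Sum>k\<in>UNIV. (\<integral>w. G h' n w * indicator (Ty k) w \<partial>M))"
      by (simp add: p_sum)
    also have "\<dots> = (\<integral>w. G h' n w * indicator SN w + (\<Sum>k\<in>UNIV. G h' n w * indicator (Ty k) w) \<partial>M)"
      by (subst Bochner_Integration.integral_add[OF intg[OF SNm] Bochner_Integration.integrable_sum[OF intg[OF Tym]]],
          subst Bochner_Integration.integral_sum[OF intg[OF Tym]], rule refl)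
    also have "\<dots> = (\<integral>w. G h' n w \<partial>M)"
      by (intro Bochner_Integration.integral_cong refl pt2[symmetric])
    finally show ?case using Suc.IH by simp
  qed
  define D where "D h' n = {w\<in>space M. T w \<le> enat n \<and> H w = h \<and> x \<le> L h' n w}" for h' n
  have Dm: "D h' n \<in> sets M" for h' n
  proof -
    have "(\<lambda>w. L h' n w) -` {x..} \<inter> space M \<in> sets M"
      using measurable_sets[OF measM[OF L_meas], of "{x..}"] by simp
    moreover have "D h' n = {w\<in>space M. T w \<le> enat n} \<inter> {w\<in>space M. H w = h} \<inter> ((\<lambda>w. L h' n w) -` {x..} \<inter> space M)"
      by (auto simp: D_def)
    ultimately show ?thesis using T_stop[of n] setsF[of n] setM[OF HM] by auto
  qed
  have Dle: "measure M (D h' n) \<le> exp (-x) * prior h" for h' n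
  proof -
    obtain B where B: "\<And>w. w\<in>space M \<Longrightarrow> \<bar>G h' n w\<bar> \<le> B" using fin_bound[OF fin_G] by blast
    have GM: "G h' n \<in> borel_measurable M" using measM[OF G_meas] .
    have "measure M (D h' n) = (\<integral>w. indicator (D h' n) w \<partial>M)"
      using Dm by (simp add: D_def Int_absorb2)
    also have "\<dots> \<le> (\<integral>w. exp (-x) * G h' n w \<partial>M)"
    proof (rule integral_mono)
      show "integrable M (indicator (D h' n) :: 'a \<Rightarrow> real)"
        using Dm by (intro integrable_const_bound[where B=1]) (auto simp: indicator_def intro!: AE_I2)
      show "integrable M (\<lambda>w. exp (-x) * G h' n w)" using B GM
        by (intro integrable_mult_right integrable_const_bound[where B=B]) (auto intro!: AE_I2)
      show "indicator (D h' n) w \<le> exp (-x) * G h' n w" if "w \<in> space M" for w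
      proof (cases "w \<in> D h' n")
        case True
        then have "exp (-x) * G h' n w = exp (L h' n w - x)"
          by (simp add: D_def G_def exp_diff exp_minus field_simps)
        moreover have "L h' n w - x \<ge> 0" using True by (simp add: D_def)
        ultimately show ?thesis using True by simp
      next
        case False then show ?thesis using G_nonneg[of h' n w] by simp
      qed
    qed
    also have "\<dots> = exp (-x) * prior h" using mart by simp
    finally show ?thesis .
  qed
  have Dinc: "incseq (D h')" for h'
  proof (rule incseq_SucI, rule subsetI)
    fix n w assume "w \<in> D h' n"
    then have w: "w \<in> space M" "T w \<le> enat n" "H w = h" "x \<le> L h' n w" by (auto simp: D_def)
    have "Obs (Suc n) w = None" using T_gone[OF w(1,2)] .
    then have "L h' (Suc n) w = L h' n w" by (simp add: L_Suc tmf_def)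
    moreover have "T w \<le> enat (Suc n)" by (rule order_trans[OF w(2)]) simp
    ultimately show "w \<in> D h' (Suc n)" using w by (simp add: D_def)
  qed
  have Ule: "measure M (\<Union>n. D h' n) \<le> exp (-x) * prior h" for h'
    using LIMSEQ_le_const2[OF finite_Lim_measure_incseq[OF _ Dinc]] Dm Dle by blast
  define Tg where "Tg = {\<omega>\<in>space M. T \<omega> \<noteq> \<infinity> \<and> Hhat \<omega> \<noteq> h \<and>
            (\<exists>h'. \<forall>l. l \<noteq> h' \<longrightarrow> llr_stat p (\<lambda>n. Obs n \<omega>) (the_enat (T \<omega>)) h' l \<ge> x)
            \<and> H \<omega> = h}"
  have sub: "Tg \<subseteq> (\<Union>h'\<in>UNIV-{h}. \<Union>n. D h' n)"
  proof
    fix w assume "w \<in> Tg"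
    then obtain h' where w: "w \<in> space M" "T w \<noteq> \<infinity>" "Hhat w \<noteq> h" "H w = h"
      and hl: "\<And>l. l \<noteq> h' \<Longrightarrow> llr_stat p (\<lambda>n. Obs n w) (the_enat (T w)) h' l \<ge> x"
      unfolding Tg_def by blast
    obtain N where N: "T w = enat N" using w(2) by (cases "T w") auto
    have "h' \<noteq> h"
    proof
      assume hh: "h' = h"
      have "x \<le> llr_stat p (\<lambda>n. Obs n w) N h (Hhat w)" using hl[of "Hhat w"] hh w(3) N by simp
      also have "\<dots> = ln (likelihood p (\<lambda>n. Obs n w) N h) - ln (likelihood p (\<lambda>n. Obs n w) N (Hhat w))"
        by (rule llr_lik[OF p_pos])
      also have "\<dots> \<le> 0"
      proof -
        have "likelihood p (\<lambda>n. Obs n w) N h > 0" by (rule lik_pos) (rule p_pos)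
        moreover have "likelihood p (\<lambda>n. Obs n w) N (Hhat w) > 0" by (rule lik_pos) (rule p_pos)
        ultimately show ?thesis using Hhat_ML[OF w(1,2), of h] N by simp
      qed
      finally show False using x_pos by simp
    qed
    moreover have "x \<le> L h' N w" using hl[of h] \<open>h' \<noteq> h\<close> N by (simp add: L_def)
    ultimately show "w \<in> (\<Union>h'\<in>UNIV-{h}. \<Union>n. D h' n)" using w N by (auto simp: D_def)
  qed
  have UM: "(\<Union>n. D h' n) \<in> sets M" for h' using Dm by blast
  have "measure M Tg \<le> measure M (\<Union>h'\<in>UNIV-{h}. \<Union>n. D h' n)"
  proof (cases "Tg \<in> sets M")
    case True
    then show ?thesis using sub UM by (intro finite_measure_mono) auto
  next
    case False then show ?thesis by (simp add: measure_notin_sets)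
  qed
  also have "\<dots> \<le> (\<Sum>h'\<in>UNIV-{h}. measure M (\<Union>n. D h' n))"
    using UM by (intro measure_UNION_le) auto
  also have "\<dots> \<le> (\<Sum>h'\<in>UNIV-{h}. exp (-x) * prior h)"
    by (intro sum_mono Ule)
  also have "\<dots> \<le> real CARD('h) * (exp (-x) * prior h)"
  proof -
    have "card (UNIV - {h}) \<le> CARD('h)" by (rule card_mono) auto
    then show ?thesis using prior_pos[of h] by (simp add: mult_right_mono)
  qed
  finally have fin: "measure M Tg \<le> real CARD('h) * exp (-x) * prior h" by simp
  show ?thesis
    unfolding Tg_def[symmetric] prior_def using fin prior_pos[of h]
    by (simp add: pos_divide_le_eq)
qed

end
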